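(* Let $h>0$, $T>0$, and let $u_h$ be the solution of the semi-discrete scheme with initial value $u_h(0)=u_{0,h}\in V_h$ (arbitrary). Then for all $t\in[0,T]$, $\|u_h(t)\|_{\mathbb L^2}^2+\int_0^t\|\Delta u_h(s)\|_{\mathbb L^2}^2\,ds+\int_0^t\|u_h(s)\|_{\mathbb L^4}^4\,ds\le C\|u_h(0)\|_{\mathbb L^2}^2$, where $C$ depends on $T$ (and the coefficients) but not on $h$.
   Context: $\Omega\subset\mathbb R^d$, $d\in\{1,2,3\}$, bounded domain with boundary regular enough that $\|v\|_{\mathbb H^2}\le C(\|v\|_{\mathbb L^2}+\|\Delta v\|_{\mathbb L^2})$ for $v\in\mathbb H^2_{\boldsymbol n}$. $\mathbb L^p,\mathbb W^{m,p},\mathbb H^m$: spaces of functions $\Omega\to\mathbb R^3$; $\langle\cdot,\cdot\rangle$ the $L^2$ inner product; $\mathbb H^2_{\boldsymbol n}=\{v\in\mathbb H^2:\partial_{\boldsymbol n}v=0\}$. Constants $\beta_1\in\mathbb R$, $\beta_2,\beta_3>0$, $\beta_4,\beta_5,\beta_6\ge0$. Forms: $\mathcal B(\phi,\eta;v,w)=\beta_3\langle(\phi\cdot\eta)v,w\rangle+\beta_5\langle(\phi\cdot\eta)\nabla v,\nabla w\rangle+\beta_5\langle\eta(\phi\cdot\nabla v),\nabla w\rangle+\beta_5\langle\phi(\eta\cdot\nabla v),\nabla w\rangle$, $\mathcal C(\eta;v,w)=-\beta_4\langle\eta\times\nabla v,\nabla w\rangle$, $\mathcal A(\phi;v,w)=\alpha\langle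 v,w\rangle+\beta_1\langle\nabla v,\nabla w\rangle+\beta_2\langle\Delta v,\Delta w\rangle+\mathcal B(\phi,\phi;v,w)+\mathcal C(\phi;v,w)$, with $\alpha>0$ fixed ($\alpha>\beta_1^2/\beta_2$ if $\beta_1<0$). Let $\boldsymbol j\in L^\infty(\Omega;\mathbb R^d)$ with $\nabla\cdot\boldsymbol j=0$ in $\Omega$, $\boldsymbol j\cdot\boldsymbol n=0$ on $\partial\Omega$, $\|\boldsymbol j\|_{L^\infty}=1$. $r=3$ if $d\le2$, $r=9$ if $d=3$. $\mathcal T_h$ is a shape-regular triangulation of $\Omega$ of mesh size $h$ and $V_h\subset\mathbb H^2_{\boldsymbol n}\cap C^1(\overline\Omega)$ is a $C^1$-conforming finite element space of piecewise polynomials of degree $r$ on $\mathcal T_h$ (e.g. cubic Hermite in 1D, Hsieh–Clough–Tocher in 2D). Semi-discrete scheme: $u_h:[0,T]\to V_h$ with $\langle\partial_tu_h,\chi\rangle+\mathcal A(u_h;u_h,\chi)-(\alpha+\beta_3)\langle u_h,\chi\rangle-\beta_6\langle(\boldsymbol j\cdot\nabla)u_h,\chi\rangle=0$ for all $\chi\in V_h$, $t\in[0,T]$. *)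

theory Defs
  imports "HOL-Analysis.Analysis" "HOL-Analysis.Cross3" "HOL-Probability.Essential_Supremum"
begin

definition pdiff :: "(real^'n \<Rightarrow> real) \<Rightarrow> 'n \<Rightarrow> real^'n \<Rightarrow> real" where
  "pdiff \<phi> i x = deriv (\<lambda>t. \<phi> (x + t *\<^sub>R axis i 1)) 0"

text \<open>C-infinity: belongs to a family of continuous functions closed under taking
  (existing) partial derivatives in every coordinate direction.\<close>
definition smooth_fun :: "(real^'n \<Rightarrow> real) \<Rightarrow> bool" where
  "smooth_fun \<phi> \<longleftrightarrow> (\<exists>F. \<phi> \<in> F \<and> (\<forall>f\<in>F. continuous_on UNIV f \<and>
      (\<forall>i. \<exists>g\<in>F. \<forall>x. ((\<lambda>t. f (x + t *\<^sub>R axis i 1)) has_real_derivative g x) (at 0))))"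

definition test_fun :: "(real^'n) set \<Rightarrow> (real^'n \<Rightarrow> real) \<Rightarrow> bool" where
  "test_fun \<Omega> \<phi> \<longleftrightarrow> smooth_fun \<phi> \<and> compact (closure {x. \<phi> x \<noteq> 0})
      \<and> closure {x. \<phi> x \<noteq> 0} \<subseteq> \<Omega>"

definition loc_integrable :: "(real^'n) set \<Rightarrow> (real^'n \<Rightarrow> 'b::euclidean_space) \<Rightarrow> bool" where
  "loc_integrable \<Omega> f \<longleftrightarrow> (\<forall>K. compact K \<and> K \<subseteq> \<Omega> \<longrightarrow> set_integrable lebesgue K f)"

definition weak_pd :: "(real^'n) set \<Rightarrow> 'n \<Rightarrow> (real^'n \<Rightarrow> 'b::euclidean_space) \<Rightarrow> (real^'n \<Rightarrow> 'b) \<Rightarrow> bool" where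
  "weak_pd \<Omega> i f g \<longleftrightarrow> loc_integrable \<Omega> f \<and> loc_integrable \<Omega> g \<and>
     (\<forall>\<phi>. test_fun \<Omega> \<phi> \<longrightarrow>
        (LINT x:\<Omega>|lebesgue. pdiff \<phi> i x *\<^sub>R f x) = - (LINT x:\<Omega>|lebesgue. \<phi> x *\<^sub>R g x))"

text \<open>The weak partial derivative (a representative; unique up to null sets).\<close>
definition wd :: "(real^'n) set \<Rightarrow> 'n \<Rightarrow> (real^'n \<Rightarrow> 'b::euclidean_space) \<Rightarrow> (real^'n \<Rightarrow> 'b)" where
  "wd \<Omega> i f = (SOME g. weak_pd \<Omega> i f g)"

definition L2 :: "(real^'n) set \<Rightarrow> (real^'n \<Rightarrow> 'b::euclidean_space) \<Rightarrow> bool" where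
  "L2 \<Omega> f \<longleftrightarrow> set_borel_measurable lebesgue \<Omega> f \<and> set_integrable lebesgue \<Omega> (\<lambda>x. norm (f x) ^ 2)"

definition H1 :: "(real^'n) set \<Rightarrow> (real^'n \<Rightarrow> 'b::euclidean_space) \<Rightarrow> bool" where
  "H1 \<Omega> f \<longleftrightarrow> L2 \<Omega> f \<and> (\<forall>i. weak_pd \<Omega> i f (wd \<Omega> i f) \<and> L2 \<Omega> (wd \<Omega> i f))"

definition H2 :: "(real^'n) set \<Rightarrow> (real^'n \<Rightarrow> 'b::euclidean_space) \<Rightarrow> bool" where
  "H2 \<Omega> f \<longleftrightarrow> H1 \<Omega> f \<and> (\<forall>i. H1 \<Omega> (wd \<Omega> i f))"

definition l2ip :: "(real^'n) set \<Rightarrow> (real^'n \<Rightarrow> 'b::euclidean_space) \<Rightarrow> (real^'n \<Rightarrow> 'b) \<Rightarrow> real" where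
  "l2ip \<Omega> f g = (LINT x:\<Omega>|lebesgue. f x \<bullet> g x)"

definition l2norm_sq :: "(real^'n) set \<Rightarrow> (real^'n \<Rightarrow> 'b::euclidean_space) \<Rightarrow> real" where
  "l2norm_sq \<Omega> f = (LINT x:\<Omega>|lebesgue. norm (f x) ^ 2)"

definition l4norm_pow4 :: "(real^'n) set \<Rightarrow> (real^'n \<Rightarrow> 'b::euclidean_space) \<Rightarrow> real" where
  "l4norm_pow4 \<Omega> f = (LINT x:\<Omega>|lebesgue. norm (f x) ^ 4)"

definition h2norm :: "(real^'n) set \<Rightarrow> (real^'n \<Rightarrow> 'b::euclidean_space) \<Rightarrow> real" where
  "h2norm \<Omega> f = sqrt (l2norm_sq \<Omega> f + (\<Sum>i\<in>UNIV. l2norm_sq \<Omega> (wd \<Omega> i f))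
       + (\<Sum>i\<in>UNIV. \<Sum>k\<in>UNIV. l2norm_sq \<Omega> (wd \<Omega> k (wd \<Omega> i f))))"

definition lap :: "(real^'n) set \<Rightarrow> (real^'n \<Rightarrow> 'b::euclidean_space) \<Rightarrow> (real^'n \<Rightarrow> 'b)" where
  "lap \<Omega> f = (\<lambda>x. \<Sum>i\<in>UNIV. wd \<Omega> i (wd \<Omega> i f) x)"

definition gradip :: "(real^'n) set \<Rightarrow> (real^'n \<Rightarrow> 'b::euclidean_space) \<Rightarrow> (real^'n \<Rightarrow> 'b) \<Rightarrow> real" where
  "gradip \<Omega> f g = (\<Sum>i\<in>UNIV. l2ip \<Omega> (wd \<Omega> i f) (wd \<Omega> i g))"

text \<open>H^2_n: H^2 functions with vanishing normal derivative on the boundary, the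
  normal derivative being understood in the weak (Green's formula) sense:
  \<langle>\<Delta>v,\<psi>\<rangle> + \<langle>\<nabla>v,\<nabla>\<psi>\<rangle> = \<integral>_{\<partial>\<Omega>} \<partial>_n v \<psi> = 0 for all \<psi> \<in> H^1.\<close>
definition H2n :: "(real^'n) set \<Rightarrow> (real^'n \<Rightarrow> real^3) \<Rightarrow> bool" where
  "H2n \<Omega> v \<longleftrightarrow> H2 \<Omega> v \<and>
     (\<forall>\<psi>::real^'n \<Rightarrow> real^3. H1 \<Omega> \<psi> \<longrightarrow> l2ip \<Omega> (lap \<Omega> v) \<psi> + gradip \<Omega> v \<psi> = 0)"

definition bounded_domain :: "(real^'n) set \<Rightarrow> bool" where
  "bounded_domain \<Omega> \<longleftrightarrow> open \<Omega> \<and> connected \<Omega> \<and> bounded \<Omega> \<and> \<Omega> \<noteq> {}"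

definition H2_regular :: "(real^'n) set \<Rightarrow> bool" where
  "H2_regular \<Omega> \<longleftrightarrow> (\<exists>C. \<forall>v. H2n \<Omega> v \<longrightarrow>
      h2norm \<Omega> v \<le> C * (sqrt (l2norm_sq \<Omega> v) + sqrt (l2norm_sq \<Omega> (lap \<Omega> v))))"

text \<open>j \<in> L^\<infinity>(\<Omega>;R^d), \<parallel>j\<parallel>_\<infinity> = 1, div j = 0 in \<Omega> and j\<cdot>n = 0 on \<partial>\<Omega>, the latter
  two in the weak sense: \<integral>_\<Omega> j\<cdot>\<nabla>\<phi> = 0 for all \<phi> \<in> H^1(\<Omega>).\<close>
definition admissible_field :: "(real^'n) set \<Rightarrow> (real^'n \<Rightarrow> real^'n) \<Rightarrow> bool" where
  "admissible_field \<Omega> j \<longleftrightarrow>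
     esssup (lebesgue_on \<Omega>) (\<lambda>x. ereal (norm (j x))) = 1 \<and>
     (\<forall>\<phi>::real^'n \<Rightarrow> real. H1 \<Omega> \<phi> \<longrightarrow>
        (LINT x:\<Omega>|lebesgue. (\<Sum>i\<in>UNIV. j x $ i * wd \<Omega> i \<phi> x)) = 0)"

definition d_simplex :: "(real^'n) set \<Rightarrow> bool" where
  "d_simplex K \<longleftrightarrow> (\<exists>S. finite S \<and> card S = CARD('n) + 1 \<and> \<not> affine_dependent S \<and> K = convex hull S)"

definition triangulation :: "(real^'n) set \<Rightarrow> (real^'n) set set \<Rightarrow> bool" where
  "triangulation \<Omega> Th \<longleftrightarrow> finite Th \<and> Th \<noteq> {} \<and> (\<forall>K\<in>Th. d_simplex K) \<and> \<Union>Th = closure \<Omega> \<and>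
     (\<forall>K\<in>Th. \<forall>K'\<in>Th. K \<noteq> K' \<longrightarrow> (K \<inter> K') face_of K \<and> (K \<inter> K') face_of K')"

definition meshsize :: "(real^'n) set set \<Rightarrow> real" where
  "meshsize Th = Max (diameter ` Th)"

definition shape_regular :: "real \<Rightarrow> (real^'n) set set \<Rightarrow> bool" where
  "shape_regular \<sigma> Th \<longleftrightarrow> (\<forall>K\<in>Th. diameter K \<le> \<sigma> * Sup {\<rho>. \<exists>x. ball x \<rho> \<subseteq> K})"

definition poly_le :: "nat \<Rightarrow> (real^'n \<Rightarrow> real^3) \<Rightarrow> bool" where
  "poly_le r p \<longleftrightarrow> (\<exists>c :: ('n \<Rightarrow> nat) \<Rightarrow> real^3. \<forall>x.
      p x = (\<Sum>\<alpha>\<in>{\<alpha>. sum \<alpha> UNIV \<le> r}. (\<Prod>i\<in>UNIV. (x $ i) ^ \<alpha> i) *\<^sub>R c \<alpha>))"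

text \<open>Piecewise polynomial of degree r on Th (allowing a subdivision of each
  element into sub-simplices, as for Hsieh-Clough-Tocher elements).\<close>
definition piecewise_poly :: "nat \<Rightarrow> (real^'n) set set \<Rightarrow> (real^'n \<Rightarrow> real^3) \<Rightarrow> bool" where
  "piecewise_poly r Th v \<longleftrightarrow> (\<forall>K\<in>Th. \<exists>P. finite P \<and> \<Union>P = K \<and>
      (\<forall>S\<in>P. d_simplex S \<and> (\<exists>p. poly_le r p \<and> (\<forall>x\<in>S. v x = p x))))"

definition C1_closure :: "(real^'n) set \<Rightarrow> (real^'n \<Rightarrow> real^3) \<Rightarrow> bool" where
  "C1_closure \<Omega> v \<longleftrightarrow> (\<exists>g :: 'n \<Rightarrow> real^'n \<Rightarrow> real^3.
      continuous_on (closure \<Omega>) v \<and> (\<forall>i. continuous_on (closure \<Omega>) (g i)) \<and>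
      (\<forall>x\<in>\<Omega>. (v has_derivative (\<lambda>y. \<Sum>i\<in>UNIV. y $ i *\<^sub>R g i x)) (at x)))"

definition fe_degree :: "'n itself \<Rightarrow> nat" where
  "fe_degree _ = (if CARD('n) \<le> 2 then 3 else 9)"

definition fe_space :: "(real^'n) set \<Rightarrow> (real^'n) set set \<Rightarrow> (real^'n \<Rightarrow> real^3) set \<Rightarrow> bool" where
  "fe_space \<Omega> Th V \<longleftrightarrow>
     (\<lambda>x. 0) \<in> V \<and> (\<forall>v\<in>V. \<forall>w\<in>V. (\<lambda>x. v x + w x) \<in> V) \<and> (\<forall>c. \<forall>v\<in>V. (\<lambda>x. c *\<^sub>R v x) \<in> V) \<and>
     (\<exists>B. finite B \<and> B \<subseteq> V \<and> (\<forall>v\<in>V. \<exists>c. v = (\<lambda>x. \<Sum>b\<in>B. c b *\<^sub>R b x))) \<and>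
     (\<forall>v\<in>V. H2n \<Omega> v \<and> C1_closure \<Omega> v \<and> piecewise_poly (fe_degree TYPE('n)) Th v)"

definition Bform :: "(real^'n) set \<Rightarrow> real \<Rightarrow> real \<Rightarrow> (real^'n \<Rightarrow> real^3) \<Rightarrow> (real^'n \<Rightarrow> real^3)
    \<Rightarrow> (real^'n \<Rightarrow> real^3) \<Rightarrow> (real^'n \<Rightarrow> real^3) \<Rightarrow> real" where
  "Bform \<Omega> \<beta>3 \<beta>5 \<phi> \<eta> v w =
     \<beta>3 * (LINT x:\<Omega>|lebesgue. (\<phi> x \<bullet> \<eta> x) * (v x \<bullet> w x))
   + \<beta>5 * (LINT x:\<Omega>|lebesgue. (\<phi> x \<bullet> \<eta> x) * (\<Sum>i\<in>UNIV. wd \<Omega> i v x \<bullet> wd \<Omega> i w x))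
   + \<beta>5 * (LINT x:\<Omega>|lebesgue. \<Sum>i\<in>UNIV. (\<phi> x \<bullet> wd \<Omega> i v x) * (\<eta> x \<bullet> wd \<Omega> i w x))
   + \<beta>5 * (LINT x:\<Omega>|lebesgue. \<Sum>i\<in>UNIV. (\<eta> x \<bullet> wd \<Omega> i v x) * (\<phi> x \<bullet> wd \<Omega> i w x))"

definition Cform :: "(real^'n) set \<Rightarrow> real \<Rightarrow> (real^'n \<Rightarrow> real^3)
    \<Rightarrow> (real^'n \<Rightarrow> real^3) \<Rightarrow> (real^'n \<Rightarrow> real^3) \<Rightarrow> real" where
  "Cform \<Omega> \<beta>4 \<eta> v w = - \<beta>4 * (\<Sum>i\<in>UNIV. LINT x:\<Omega>|lebesgue. (cross3 (\<eta> x) (wd \<Omega> i v x)) \<bullet> wd \<Omega> i w x)"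

definition Aform :: "(real^'n) set \<Rightarrow> real \<Rightarrow> real \<Rightarrow> real \<Rightarrow> real \<Rightarrow> real \<Rightarrow> real \<Rightarrow>
    (real^'n \<Rightarrow> real^3) \<Rightarrow> (real^'n \<Rightarrow> real^3) \<Rightarrow> (real^'n \<Rightarrow> real^3) \<Rightarrow> real" where
  "Aform \<Omega> \<alpha> \<beta>1 \<beta>2 \<beta>3 \<beta>4 \<beta>5 \<phi> v w =
     \<alpha> * l2ip \<Omega> v w + \<beta>1 * gradip \<Omega> v w + \<beta>2 * l2ip \<Omega> (lap \<Omega> v) (lap \<Omega> w)
   + Bform \<Omega> \<beta>3 \<beta>5 \<phi> \<phi> v w + Cform \<Omega> \<beta>4 \<phi> v w"

definition transport :: "(real^'n) set \<Rightarrow> (real^'n \<Rightarrow> real^'n) \<Rightarrow> (real^'n \<Rightarrow> real^3) \<Rightarrow> (real^'n \<Rightarrow> real^3) \<Rightarrow> real" where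
  "transport \<Omega> j v w = (LINT x:\<Omega>|lebesgue. \<Sum>i\<in>UNIV. j x $ i * (wd \<Omega> i v x \<bullet> w x))"

definition semidiscrete_solution :: "(real^'n) set \<Rightarrow> (real^'n \<Rightarrow> real^'n) \<Rightarrow>
    real \<Rightarrow> real \<Rightarrow> real \<Rightarrow> real \<Rightarrow> real \<Rightarrow> real \<Rightarrow> real \<Rightarrow> real \<Rightarrow> (real^'n \<Rightarrow> real^3) set \<Rightarrow>
    (real \<Rightarrow> real^'n \<Rightarrow> real^3) \<Rightarrow> (real \<Rightarrow> real^'n \<Rightarrow> real^3) \<Rightarrow> bool" where
  "semidiscrete_solution \<Omega> j \<alpha> \<beta>1 \<beta>2 \<beta>3 \<beta>4 \<beta>5 \<beta>6 T V u u' \<longleftrightarrow>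
     (\<forall>t\<in>{0..T}. u t \<in> V \<and> u' t \<in> V \<and>
        (\<forall>x\<in>\<Omega>. ((\<lambda>s. u s x) has_vector_derivative u' t x) (at t within {0..T})) \<and>
        (\<forall>w\<in>V. l2ip \<Omega> (u' t) w + Aform \<Omega> \<alpha> \<beta>1 \<beta>2 \<beta>3 \<beta>4 \<beta>5 (u t) (u t) w
                 - (\<alpha> + \<beta>3) * l2ip \<Omega> (u t) w - \<beta>6 * transport \<Omega> j (u t) w = 0))"

end

theory Submission imports Defs "HOL-Library.Function_Algebras"
begin


definition fscale :: "real \<Rightarrow> ('a \<Rightarrow> 'b::real_vector) \<Rightarrow> ('a \<Rightarrow> 'b)" where
  "fscale c f = (\<lambda>x. c *\<^sub>R f x)"

interpretation fv: vector_space "fscale :: real \<Rightarrow> ('a \<Rightarrow> 'b::real_vector) \<Rightarrow> ('a \<Rightarrow> 'b)"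
  by unfold_locales (auto simp: fscale_def fun_eq_iff scaleR_add_right scaleR_add_left)

lemma fsum_apply: "finite A \<Longrightarrow> (sum f A :: 'a \<Rightarrow> 'b::comm_monoid_add) x = (\<Sum>a\<in>A. f a x)"
  by (induction A rule: finite_induct) auto

lemma dim_less:
  fixes W W1 :: "('a \<Rightarrow> 'b::real_vector) set"
  assumes "fv.subspace W1" "W1 \<subseteq> W" "w \<in> W" "w \<notin> W1" "W \<subseteq> fv.span B" "finite B"
  shows "fv.dim W1 < fv.dim W"
proof -
  obtain B1 where B1: "B1 \<subseteq> W1" "fv.independent B1" "W1 \<subseteq> fv.span B1" "card B1 = fv.dim W1"
    using fv.basis_exists by blast
  obtain B2 where B2: "B2 \<subseteq> W" "fv.independent B2" "W \<subseteq> fv.span B2" "card B2 = fv.dim W"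
    using fv.basis_exists by blast
  have fB2: "finite B2" using fv.independent_span_bound[OF assms(6) B2(2)] B2(1) assms(5) by auto
  have "fv.span B1 \<subseteq> W1" using fv.span_minimal[OF B1(1) assms(1)] .
  hence wn: "w \<notin> fv.span B1" using assms(4) by blast
  have ind: "fv.independent (insert w B1)" using fv.independent_insertI[OF wn B1(2)] .
  have "insert w B1 \<subseteq> fv.span B2" using B1(1) assms(2,3) B2(3) by blast
  from fv.independent_span_bound[OF fB2 ind this]
  have "finite (insert w B1)" "card (insert w B1) \<le> card B2" by auto
  moreover have "w \<notin> B1" using wn fv.span_base by blast
  ultimately show ?thesis using B1(4) B2(4) by auto
qed


lemma sq_sum_le: "(a+b)^2 \<le> 2*a^2 + 2*(b::real)^2"
proof -
  have "0 \<le> (a-b)^2" by simp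
  thus ?thesis by (simp add: power2_eq_square algebra_simps)
qed

lemma key_bound:
  fixes VV :: "('a \<Rightarrow> real^3) set" and N :: "('a \<Rightarrow> real^3) \<Rightarrow> real"
  assumes Nadd: "\<And>f g. f\<in>VV \<Longrightarrow> g\<in>VV \<Longrightarrow> N (f + g) \<le> 2*N f + 2*N g"
  and Nscale: "\<And>c f. f\<in>VV \<Longrightarrow> N (fscale c f) = c^2 * N f"
  and Nnn: "\<And>f. f \<in> VV \<Longrightarrow> N f \<ge> 0"
  and Nz: "\<And>f. f\<in>VV \<Longrightarrow> (\<forall>x\<in>\<Omega>. f x = 0) \<Longrightarrow> N f = 0"
  and fB: "finite B"
  shows "fv.subspace W \<Longrightarrow> W \<subseteq> VV \<Longrightarrow> W \<subseteq> fv.span B \<Longrightarrow>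
     \<exists>X M. finite X \<and> X \<subseteq> \<Omega> \<and> M \<ge> 0 \<and> (\<forall>v\<in>W. N v \<le> M * (\<Sum>x\<in>X. norm (v x)^2))"
proof (induction "fv.dim W" arbitrary: W rule: less_induct)
  case less
  show ?case
  proof (cases "\<forall>v\<in>W. \<forall>x\<in>\<Omega>. v x = 0")
    case True
    then show ?thesis using Nz less.prems(2) by (intro exI[of _ "{}"] exI[of _ 0]) auto
  next
    case False
    then obtain w0 x0 where w0: "w0 \<in> W" "x0 \<in> \<Omega>" "w0 x0 \<noteq> 0" by blast
    then obtain k where k: "w0 x0 $ k \<noteq> 0" by (metis vec_eq_iff zero_index)
    define W1 where "W1 = {v\<in>W. v x0 $ k = 0}"
    have sW1: "fv.subspace W1"
      using less.prems(1) unfolding W1_def fv.subspace_def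
      by (auto simp: fscale_def)
    have "fv.dim W1 < fv.dim W"
      by (rule dim_less[OF sW1 _ w0(1) _ less.prems(3) fB]) (use k in \<open>auto simp: W1_def\<close>)
    from less.hyps[OF this sW1] less.prems(2,3)
    obtain X1 M1 where X1: "finite X1" "X1 \<subseteq> \<Omega>" "M1 \<ge> 0"
      "\<forall>v\<in>W1. N v \<le> M1 * (\<Sum>x\<in>X1. norm (v x)^2)"
      unfolding W1_def by blast
    define c where "c = (w0 x0 $ k)^2"
    have c: "c > 0" using k by (simp add: c_def)
    define Sw where "Sw = (\<Sum>x\<in>X1. norm (w0 x)^2)"
    define A where "A = 4*M1*Sw + 2 * N w0"
    have "Sw \<ge> 0" unfolding Sw_def by (rule sum_nonneg) simp
    hence A: "A \<ge> 0" using X1(3) Nnn[of w0] w0(1) less.prems(2) by (auto simp: A_def)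
    define M where "M = 4*M1 + A/c"
    have "\<forall>v\<in>W. N v \<le> M * (\<Sum>x\<in>insert x0 X1. norm (v x)^2)"
    proof
      fix v assume v: "v \<in> W"
      define l where "l = v x0 $ k / w0 x0 $ k"
      define v1 where "v1 = v + fscale (-l) w0"
      have v1W: "v1 \<in> W" unfolding v1_def
        using fv.subspace_add[OF less.prems(1) v fv.subspace_scale[OF less.prems(1) w0(1)]] .
      have "v1 x0 $ k = 0" using k by (simp add: v1_def fscale_def l_def)
      hence v1W1: "v1 \<in> W1" using v1W by (simp add: W1_def)
      have vv: "v = v1 + fscale l w0" by (simp add: v1_def fscale_def fun_eq_iff)
      have inVV: "v1 \<in> VV" "fscale l w0 \<in> VV" "w0 \<in> VV"
        using v1W w0(1) less.prems(1,2) fv.subspace_scale by blast+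
      have "N v \<le> 2 * N v1 + 2 * N (fscale l w0)" using Nadd[OF inVV(1,2)] vv by simp
      also have "N (fscale l w0) = l^2 * N w0" using Nscale inVV(3) by simp
      also have "N v1 \<le> M1 * (\<Sum>x\<in>X1. norm (v1 x)^2)" using X1(4) v1W1 by blast
      also have "(\<Sum>x\<in>X1. norm (v1 x)^2) \<le> (\<Sum>x\<in>X1. 2 * norm (v x)^2 + 2 * l^2 * norm (w0 x)^2)"
      proof (rule sum_mono)
        fix x
        have "norm (v1 x) \<le> norm (v x) + \<bar>l\<bar> * norm (w0 x)"
          using norm_triangle_ineq[of "v x" "(-l) *\<^sub>R w0 x"] by (simp add: v1_def fscale_def)
        hence "norm (v1 x)^2 \<le> (norm (v x) + \<bar>l\<bar> * norm (w0 x))^2" by (simp add: power_mono)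
        also have "\<dots> \<le> 2 * norm (v x)^2 + 2 * l^2 * norm (w0 x)^2"
          using sq_sum_le[of "norm (v x)" "\<bar>l\<bar> * norm (w0 x)"] by (simp add: power_mult_distrib)
        finally show "norm (v1 x)^2 \<le> 2 * norm (v x)^2 + 2 * l^2 * norm (w0 x)^2" .
      qed
      finally have "N v \<le> 2 * (M1 * (\<Sum>x\<in>X1. 2 * norm (v x)^2 + 2 * l^2 * norm (w0 x)^2)) + 2 * (l^2 * N w0)"
        using X1(3) by (simp add: mult_left_mono)
      also have "\<dots> = 4*M1 * (\<Sum>x\<in>X1. norm (v x)^2) + l^2 * A"
        by (simp add: A_def Sw_def sum.distrib sum_distrib_left algebra_simps)
      also have "l^2 \<le> norm (v x0)^2 / c"
      proof -
        have "l^2 = (v x0 $ k)^2 / c" by (simp add: l_def c_def power_divide)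
        also have "(v x0 $ k)^2 \<le> norm (v x0)^2"
          using component_le_norm_cart[of "v x0" k] by (metis abs_le_square_iff abs_norm_cancel)
        hence "(v x0 $ k)^2 / c \<le> norm (v x0)^2 / c" using c by (simp add: divide_right_mono)
        finally show ?thesis .
      qed
      hence "l^2 * A \<le> norm (v x0)^2 / c * A" using A by (rule mult_right_mono)
      finally have 1: "N v \<le> 4 * M1 * (\<Sum>x\<in>X1. norm (v x)^2) + A / c * norm (v x0)^2" by (simp add: mult.commute)
      define T where "T = (\<Sum>x\<in>insert x0 X1. norm (v x)^2)"
      have T1: "(\<Sum>x\<in>X1. norm (v x)^2) \<le> T" unfolding T_def
        by (rule sum_mono2) (use X1(1) in auto)
      have T2: "norm (v x0)^2 \<le> T" unfolding T_def
        using member_le_sum[of x0 "insert x0 X1" "\<lambda>x. norm (v x)^2"] X1(1) by auto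
      have "4 * M1 * (\<Sum>x\<in>X1. norm (v x)^2) \<le> 4 * M1 * T" using T1 X1(3) by (simp add: mult_left_mono)
      moreover have "A / c * norm (v x0)^2 \<le> A / c * T" using T2 A c by (intro mult_left_mono) auto
      ultimately show "N v \<le> M * T" using 1 by (simp add: M_def algebra_simps)
    qed
    moreover have "M \<ge> 0" using A c X1(3) by (simp add: M_def)
    ultimately show ?thesis using X1(1,2) w0(2) by (intro exI[of _ "insert x0 X1"] exI[of _ M]) auto
  qed
qed



lemma sbm_iff: "set_borel_measurable M A f \<longleftrightarrow> (\<lambda>x. indicator A x *\<^sub>R f x) \<in> borel_measurable M"
  by (simp add: set_borel_measurable_def)

lemma ind_cases_eq:
  fixes F :: "'b::real_vector \<Rightarrow> 'c::real_vector"
  assumes "F 0 = 0"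
  shows "(\<lambda>x. indicator A x *\<^sub>R F (f x)) = (\<lambda>x. F (indicator A x *\<^sub>R f x))"
  using assms by (auto simp: indicator_def fun_eq_iff)

lemma sbm_comp:
  fixes f :: "'a \<Rightarrow> 'b::euclidean_space"
  assumes "set_borel_measurable M A f" "F \<in> borel_measurable borel" "F 0 = (0::'c::euclidean_space)"
  shows "set_borel_measurable M A (\<lambda>x. F (f x))"
  using measurable_compose[OF assms(1)[unfolded sbm_iff] assms(2)]
  unfolding sbm_iff ind_cases_eq[of F, OF assms(3)] .

lemma sbm_add:
  fixes f g :: "'a \<Rightarrow> 'b::euclidean_space"
  assumes "set_borel_measurable M A f" "set_borel_measurable M A g"
  shows "set_borel_measurable M A (\<lambda>x. f x + g x)"
proof -
  have "(\<lambda>x. indicator A x *\<^sub>R (f x + g x)) = (\<lambda>x. indicator A x *\<^sub>R f x + indicator A x *\<^sub>R g x)"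
    by (simp add: scaleR_add_right)
  thus ?thesis using borel_measurable_add[OF assms[unfolded sbm_iff]] unfolding sbm_iff by simp
qed

lemma sbm_inner:
  fixes f g :: "'a \<Rightarrow> 'b::euclidean_space"
  assumes "set_borel_measurable M A f" "set_borel_measurable M A g"
  shows "set_borel_measurable M A (\<lambda>x. f x \<bullet> g x)"
proof -
  have "(\<lambda>x. indicator A x *\<^sub>R (f x \<bullet> g x)) = (\<lambda>x. (indicator A x *\<^sub>R f x) \<bullet> (indicator A x *\<^sub>R g x))"
    by (auto simp: indicator_def fun_eq_iff)
  thus ?thesis using borel_measurable_inner[OF assms[unfolded sbm_iff]] unfolding sbm_iff by simp
qed

lemma sbm_normsq:
  fixes f :: "'a \<Rightarrow> 'b::euclidean_space"
  shows "set_borel_measurable M A f \<Longrightarrow> set_borel_measurable M A (\<lambda>x. norm (f x)^2)"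
  by (rule sbm_comp[where F="\<lambda>v. norm v ^2"]) auto

lemma sbm_scale:
  fixes f :: "'a \<Rightarrow> 'b::euclidean_space"
  shows "set_borel_measurable M A f \<Longrightarrow> set_borel_measurable M A (\<lambda>x. c *\<^sub>R f x)"
  by (rule sbm_comp[where F="\<lambda>v. c *\<^sub>R v"]) auto

lemma ab_le: "0 \<le> a \<Longrightarrow> 0 \<le> b \<Longrightarrow> a * b \<le> a^2 + (b::real)^2"
proof -
  assume "0 \<le> a" "0 \<le> b"
  have "0 \<le> (a-b)^2" by simp
  hence "2*(a*b) \<le> a^2+b^2" by (simp add: power2_diff)
  moreover have "0 \<le> a*b" using \<open>0 \<le> a\<close> \<open>0 \<le> b\<close> by simp
  ultimately show ?thesis by linarith
qed

lemma L2_add: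
  fixes f g :: "real^'n \<Rightarrow> 'b::euclidean_space"
  assumes "L2 \<Omega> f" "L2 \<Omega> g" shows "L2 \<Omega> (\<lambda>x. f x + g x)"
proof -
  have m: "set_borel_measurable lebesgue \<Omega> (\<lambda>x. f x + g x)"
    using assms by (auto simp: L2_def intro: sbm_add)
  have i: "set_integrable lebesgue \<Omega> (\<lambda>x. 2 * norm (f x)^2 + 2 * norm (g x)^2)"
    using assms by (auto simp: L2_def)
  have "set_integrable lebesgue \<Omega> (\<lambda>x. norm (f x + g x)^2)"
  proof (rule set_integrable_bound[OF i sbm_normsq[OF m]])
    show "AE x in lebesgue. x \<in> \<Omega> \<longrightarrow> norm (norm (f x + g x)^2) \<le> norm (2 * norm (f x)^2 + 2 * norm (g x)^2)"
    proof (rule AE_I2, safe)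
      fix x
      have "norm (f x + g x)^2 \<le> (norm (f x) + norm (g x))^2"
        by (simp add: norm_triangle_ineq power_mono)
      also have "\<dots> \<le> 2 * norm (f x)^2 + 2 * norm (g x)^2" by (rule sq_sum_le)
      finally show "norm (norm (f x + g x)^2) \<le> norm (2 * norm (f x)^2 + 2 * norm (g x)^2)" by simp
    qed
  qed
  thus ?thesis using m by (simp add: L2_def)
qed

lemma L2_scale:
  fixes f :: "real^'n \<Rightarrow> 'b::euclidean_space"
  assumes "L2 \<Omega> f" shows "L2 \<Omega> (\<lambda>x. c *\<^sub>R f x)"
  using assms by (auto simp: L2_def power_mult_distrib intro: sbm_scale)

lemma L2_ip_int:
  fixes f g :: "real^'n \<Rightarrow> 'b::euclidean_space"
  assumes "L2 \<Omega> f" "L2 \<Omega> g" shows "set_integrable lebesgue \<Omega> (\<lambda>x. f x \<bullet> g x)"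
proof -
  have i: "set_integrable lebesgue \<Omega> (\<lambda>x. norm (f x)^2 + norm (g x)^2)"
    using assms by (auto simp: L2_def)
  show ?thesis
  proof (rule set_integrable_bound[OF i sbm_inner])
    show "set_borel_measurable lebesgue \<Omega> f" "set_borel_measurable lebesgue \<Omega> g"
      using assms by (auto simp: L2_def)
    show "AE x in lebesgue. x \<in> \<Omega> \<longrightarrow> norm (f x \<bullet> g x) \<le> norm (norm (f x)^2 + norm (g x)^2)"
    proof (rule AE_I2, safe)
      fix x
      have "norm (f x \<bullet> g x) \<le> norm (f x) * norm (g x)" using Cauchy_Schwarz_ineq2 by simp
      also have "\<dots> \<le> norm (f x)^2 + norm (g x)^2" by (rule ab_le) auto
      finally show "norm (f x \<bullet> g x) \<le> norm (norm (f x)^2 + norm (g x)^2)" by simp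
    qed
  qed
qed

lemma l2ip_self: "l2ip \<Omega> f f = l2norm_sq \<Omega> f"
  by (simp add: l2ip_def l2norm_sq_def power2_norm_eq_inner)

lemma N_nonneg: "l2norm_sq \<Omega> f \<ge> 0"
  unfolding l2norm_sq_def set_lebesgue_integral_def
  by (rule integral_nonneg_AE) (auto simp: indicator_def)

lemma N_scale: "l2norm_sq \<Omega> (\<lambda>x. c *\<^sub>R f x) = c^2 * l2norm_sq \<Omega> f"
  by (simp add: l2norm_sq_def power_mult_distrib)

lemma N_zero: "(\<forall>x\<in>\<Omega>. f x = 0) \<Longrightarrow> l2norm_sq \<Omega> f = 0"
proof -
  assume "\<forall>x\<in>\<Omega>. f x = 0"
  hence "(\<lambda>x. indicator \<Omega> x *\<^sub>R norm (f x)^2) = (\<lambda>x. 0::real)"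
    by (auto simp: indicator_def fun_eq_iff)
  thus ?thesis unfolding l2norm_sq_def set_lebesgue_integral_def by simp
qed

lemma N_expand:
  fixes f g :: "real^'n \<Rightarrow> 'b::euclidean_space"
  assumes "L2 \<Omega> f" "L2 \<Omega> g"
  shows "l2norm_sq \<Omega> (\<lambda>x. f x + g x) = l2norm_sq \<Omega> f + 2 * l2ip \<Omega> f g + l2norm_sq \<Omega> g"
proof -
  have e: "\<And>x. norm (f x + g x)^2 = norm (f x)^2 + 2 * (f x \<bullet> g x) + norm (g x)^2"
    by (simp add: power2_norm_eq_inner inner_add_left inner_add_right inner_commute)
  have i1: "set_integrable lebesgue \<Omega> (\<lambda>x. norm (f x)^2)" "set_integrable lebesgue \<Omega> (\<lambda>x. norm (g x)^2)"
    using assms by (auto simp: L2_def)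
  have i2: "set_integrable lebesgue \<Omega> (\<lambda>x. 2 * (f x \<bullet> g x))" using L2_ip_int[OF assms] by simp
  show ?thesis unfolding l2norm_sq_def l2ip_def e
    using i1 i2 by (simp add: set_integral_add)
qed

lemma ip_amgm:
  fixes f g :: "real^'n \<Rightarrow> 'b::euclidean_space"
  assumes "L2 \<Omega> f" "L2 \<Omega> g" "e > 0"
  shows "\<bar>l2ip \<Omega> f g\<bar> \<le> (e * l2norm_sq \<Omega> f + l2norm_sq \<Omega> g / e) / 2"
proof -
  have pt: "\<bar>f x \<bullet> g x\<bar> \<le> (e * norm (f x)^2 + norm (g x)^2 / e) / 2" for x
  proof -
    have "\<bar>f x \<bullet> g x\<bar> \<le> norm (f x) * norm (g x)" by (rule Cauchy_Schwarz_ineq2)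
    also have "\<dots> \<le> (e * norm (f x)^2 + norm (g x)^2 / e) / 2"
    proof -
      have "0 \<le> (e * norm (f x) - norm (g x))^2 / e" using assms(3) by simp
      thus ?thesis using assms(3) by (simp add: power2_eq_square field_simps)
    qed
    finally show ?thesis .
  qed
  have i: "set_integrable lebesgue \<Omega> (\<lambda>x. (e * norm (f x)^2 + norm (g x)^2 / e) / 2)"
    using assms by (auto simp: L2_def)
  have ip: "set_integrable lebesgue \<Omega> (\<lambda>x. f x \<bullet> g x)" using L2_ip_int[OF assms(1,2)] .
  have ipm: "set_integrable lebesgue \<Omega> (\<lambda>x. - (f x \<bullet> g x))"
    using set_integrable_mult_right[OF ip, of "-1"] by simp
  have "l2ip \<Omega> f g \<le> (LINT x:\<Omega>|lebesgue. (e * norm (f x)^2 + norm (g x)^2 / e) / 2)"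
    unfolding l2ip_def by (rule set_integral_mono[OF ip i]) (meson pt abs_ge_self order_trans)
  moreover have "- l2ip \<Omega> f g \<le> (LINT x:\<Omega>|lebesgue. (e * norm (f x)^2 + norm (g x)^2 / e) / 2)"
    unfolding l2ip_def set_integral_uminus[OF ip, symmetric]
    by (rule set_integral_mono[OF ipm i]) (meson pt abs_ge_minus_self order_trans)
  moreover have "(LINT x:\<Omega>|lebesgue. (e * norm (f x)^2 + norm (g x)^2 / e) / 2)
      = (e * l2norm_sq \<Omega> f + l2norm_sq \<Omega> g / e) / 2"
    using assms unfolding l2norm_sq_def L2_def by (simp add: set_integral_add)
  ultimately show ?thesis by linarith
qed



lemma vd_quot:
  fixes f :: "real \<Rightarrow> 'b::real_normed_vector"
  assumes "(f has_vector_derivative f') (at t within S)"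
  shows "((\<lambda>y. (1/(y-t)) *\<^sub>R (f y - f t) - f') \<longlongrightarrow> 0) (at t within S)"
proof -
  from assms have L: "((\<lambda>y. (1 / norm(y - t)) *\<^sub>R (f y - (f t + (y - t) *\<^sub>R f'))) \<longlongrightarrow> 0) (at t within S)"
    unfolding has_vector_derivative_def has_derivative_within by blast
  have L2: "((\<lambda>y. norm ((1 / norm(y - t)) *\<^sub>R (f y - (f t + (y - t) *\<^sub>R f')))) \<longlongrightarrow> 0) (at t within S)"
    using tendsto_norm_zero[OF L] .
  have ev: "\<forall>\<^sub>F y in at t within S. y \<noteq> t" by (auto simp: eventually_at_filter)
  show ?thesis
  proof (rule Lim_null_comparison[OF _ L2])
    show "\<forall>\<^sub>F y in at t within S. norm ((1/(y-t)) *\<^sub>R (f y - f t) - f') \<le> norm ((1 / norm(y - t)) *\<^sub>R (f y - (f t + (y - t) *\<^sub>R f')))"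
      using ev
    proof eventually_elim
      case (elim y)
      hence "(1/(y-t)) *\<^sub>R (f y - f t) - f' = (1/(y-t)) *\<^sub>R (f y - (f t + (y - t) *\<^sub>R f'))"
        by (simp add: scaleR_diff_right scaleR_add_right)
      thus ?case by simp
    qed
  qed
qed

lemma ip_CS:
  fixes f g :: "real^'n \<Rightarrow> 'b::euclidean_space"
  assumes "L2 \<Omega> f" "L2 \<Omega> g"
  shows "\<bar>l2ip \<Omega> f g\<bar> \<le> sqrt (l2norm_sq \<Omega> f) * sqrt (l2norm_sq \<Omega> g)"
proof -
  define a where "a = l2norm_sq \<Omega> f"
  define b where "b = l2norm_sq \<Omega> g"
  define p where "p = \<bar>l2ip \<Omega> f g\<bar>"
  have a: "a \<ge> 0" and b: "b \<ge> 0" and p: "p \<ge> 0" by (auto simp: a_def b_def p_def N_nonneg)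
  have H: "\<And>e. e > 0 \<Longrightarrow> p \<le> (e * a + b / e) / 2"
    using ip_amgm[OF assms] by (simp add: a_def b_def p_def)
  show ?thesis
  proof (cases "a = 0 \<or> b = 0")
    case True
    have "p = 0"
    proof (rule ccontr)
      assume "p \<noteq> 0" hence p0: "p > 0" using p by simp
      show False
      proof (cases "a = 0")
        case True
        define e where "e = (b+1)/p"
        have e: "e > 0" using p0 b by (simp add: e_def)
        have "p \<le> b / e / 2" using H[OF e] True by simp
        also have "\<dots> = b * p / (2*(b+1))" using p0 b by (simp add: e_def field_simps)
        also have "\<dots> < p" using p0 b by (simp add: field_simps) (use mult_nonneg_nonneg[of b p] in linarith)
        finally show False by simp
      next
        case False
        hence b0: "b = 0" using \<open>a = 0 \<or> b = 0\<close> by simp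
        define e where "e = p/(a+1)"
        have e: "e > 0" using p0 a by (simp add: e_def)
        have "p \<le> e * a / 2" using H[OF e] b0 by simp
        also have "\<dots> = p * a / (2*(a+1))" using p0 a by (simp add: e_def field_simps)
        also have "\<dots> < p" using p0 a by (simp add: field_simps) (use mult_nonneg_nonneg[of a p] in linarith)
        finally show False by simp
      qed
    qed
    thus ?thesis using a b by (simp add: p_def a_def b_def)
  next
    case False
    hence a0: "a > 0" and b0: "b > 0" using a b by auto
    define e where "e = sqrt b / sqrt a"
    have e: "e > 0" using a0 b0 by (simp add: e_def)
    have "p \<le> (e * a + b / e) / 2" using H[OF e] .
    also have "\<dots> = sqrt a * sqrt b"
    proof -
      have sa: "sqrt a * sqrt a = a" "sqrt b * sqrt b = b" using a b by simp_all
      have na: "sqrt a > 0" "sqrt b > 0" using a0 b0 by simp_all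
      have "e * a = sqrt a * sqrt b" unfolding e_def
        by (subst (2) sa(1)[symmetric]) (use na in \<open>simp add: field_simps\<close>)
      moreover have "b / e = sqrt a * sqrt b" unfolding e_def
        by (subst (1) sa(2)[symmetric]) (use na in \<open>simp add: field_simps\<close>)
      ultimately show ?thesis by simp
    qed
    finally show ?thesis by (simp add: p_def a_def b_def)
  qed
qed

lemma l2ip_scale_right: "l2ip \<Omega> f (\<lambda>x. c *\<^sub>R g x) = c * l2ip \<Omega> f g"
  by (simp add: l2ip_def)

lemma l2ip_add_right:
  fixes f g h :: "real^'n \<Rightarrow> 'b::euclidean_space"
  assumes "L2 \<Omega> f" "L2 \<Omega> g" "L2 \<Omega> h"
  shows "l2ip \<Omega> f (\<lambda>x. g x + h x) = l2ip \<Omega> f g + l2ip \<Omega> f h"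
  unfolding l2ip_def inner_add_right
  using L2_ip_int[OF assms(1,2)] L2_ip_int[OF assms(1,3)] by (simp add: set_integral_add)

lemma l2ip_comm: "l2ip \<Omega> f g = l2ip \<Omega> g f"
  by (simp add: l2ip_def inner_commute)



lemma fe_lin:
  assumes "fe_space \<Omega> Th V" "v\<in>V" "w\<in>V"
  shows "(\<lambda>x. a *\<^sub>R v x + b *\<^sub>R w x) \<in> V"
proof -
  have 1: "(\<lambda>x. a *\<^sub>R v x) \<in> V" "(\<lambda>x. b *\<^sub>R w x) \<in> V" using assms by (auto simp: fe_space_def)
  have "\<forall>v\<in>V. \<forall>w\<in>V. (\<lambda>x. v x + w x) \<in> V" using assms(1) unfolding fe_space_def by blast
  from this[rule_format, OF 1] show ?thesis .
qed

lemma fe_subspace: "fe_space \<Omega> Th V \<Longrightarrow> fv.subspace V"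
  unfolding fv.subspace_def fe_space_def fscale_def plus_fun_def zero_fun_def by blast

lemma fe_span: assumes "fe_space \<Omega> Th V" shows "\<exists>B. finite B \<and> V \<subseteq> fv.span B"
proof -
  obtain B where B: "finite B" "B \<subseteq> V" "\<forall>v\<in>V. \<exists>c. v = (\<lambda>x. \<Sum>b\<in>B. c b *\<^sub>R b x)"
    using assms unfolding fe_space_def by blast
  have "V \<subseteq> fv.span B"
  proof
    fix v assume "v \<in> V"
    then obtain c where c: "v = (\<lambda>x. \<Sum>b\<in>B. c b *\<^sub>R b x)" using B(3) by blast
    have "v = sum (\<lambda>b. fscale (c b) b) B" unfolding c fun_eq_iff
      by (simp add: fsum_apply[OF B(1)] fscale_def)
    also have "\<dots> \<in> fv.span B" by (intro fv.span_sum fv.span_scale fv.span_base)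
    finally show "v \<in> fv.span B" .
  qed
  thus ?thesis using B(1) by blast
qed

lemma fe_L2: "fe_space \<Omega> Th V \<Longrightarrow> v \<in> V \<Longrightarrow> L2 \<Omega> v"
  unfolding fe_space_def H2n_def H2_def H1_def by blast

lemma N_add_le:
  fixes f g :: "real^'n \<Rightarrow> 'b::euclidean_space"
  assumes "L2 \<Omega> f" "L2 \<Omega> g"
  shows "l2norm_sq \<Omega> (\<lambda>x. f x + g x) \<le> 2 * l2norm_sq \<Omega> f + 2 * l2norm_sq \<Omega> g"
  using N_expand[OF assms] ip_amgm[OF assms, of 1] by (simp add: abs_le_iff)

lemma conv0:
  fixes g :: "'c \<Rightarrow> real^'n \<Rightarrow> real^3"
  assumes fe: "fe_space \<Omega> Th V" and ev: "\<forall>\<^sub>F s in F. g s \<in> V"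
    and pt: "\<forall>x\<in>\<Omega>. ((\<lambda>s. g s x) \<longlongrightarrow> 0) F"
  shows "((\<lambda>s. l2norm_sq \<Omega> (g s)) \<longlongrightarrow> 0) F"
proof -
  obtain B where B: "finite B" "V \<subseteq> fv.span B" using fe_span[OF fe] by blast
  have "\<exists>X M. finite X \<and> X \<subseteq> \<Omega> \<and> M \<ge> 0 \<and> (\<forall>v\<in>V. l2norm_sq \<Omega> v \<le> M * (\<Sum>x\<in>X. norm (v x)^2))"
  proof (rule key_bound[where VV=V and B=B])
    show "\<And>f g. f \<in> V \<Longrightarrow> g \<in> V \<Longrightarrow> l2norm_sq \<Omega> (f + g) \<le> 2 * l2norm_sq \<Omega> f + 2 * l2norm_sq \<Omega> g"
      unfolding plus_fun_def using N_add_le fe_L2[OF fe] by blast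
    show "\<And>c f. f \<in> V \<Longrightarrow> l2norm_sq \<Omega> (fscale c f) = c\<^sup>2 * l2norm_sq \<Omega> f"
      by (simp add: fscale_def N_scale)
  qed (use B fe_subspace[OF fe] N_nonneg N_zero in auto)
  then obtain X M where XM: "finite X" "X \<subseteq> \<Omega>" "M \<ge> 0"
    "\<forall>v\<in>V. l2norm_sq \<Omega> v \<le> M * (\<Sum>x\<in>X. norm (v x)^2)" by blast
  have lim: "((\<lambda>s. M * (\<Sum>x\<in>X. norm (g s x)^2)) \<longlongrightarrow> 0) F"
  proof (rule tendsto_mult_right_zero, rule tendsto_null_sum)
    fix x assume "x \<in> X"
    hence "((\<lambda>s. g s x) \<longlongrightarrow> 0) F" using pt XM(2) by blast
    hence "((\<lambda>s. norm (g s x)) \<longlongrightarrow> 0) F" by (rule tendsto_norm_zero)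
    from tendsto_power[OF this, of 2] show "((\<lambda>s. norm (g s x)^2) \<longlongrightarrow> 0) F" by simp
  qed
  show ?thesis
  proof (rule Lim_null_comparison[OF _ lim])
    show "\<forall>\<^sub>F s in F. norm (l2norm_sq \<Omega> (g s)) \<le> M * (\<Sum>x\<in>X. norm (g s x)^2)"
      using ev
    proof eventually_elim
      case (elim s)
      have "l2norm_sq \<Omega> (g s) \<le> M * (\<Sum>x\<in>X. norm (g s x)^2)" using XM(4) elim by blast
      thus ?case using N_nonneg[of \<Omega> "g s"] by simp
    qed
  qed
qed

lemma E_deriv:
  assumes fe: "fe_space \<Omega> Th V" and uV: "\<forall>s\<in>{0..T}. u s \<in> V" and u'V: "u' \<in> V"
    and d: "\<forall>x\<in>\<Omega>. ((\<lambda>s. u s x) has_vector_derivative u' x) (at t within {0..T})"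
    and ts: "t \<in> {0..T}"
  shows "((\<lambda>s. l2norm_sq \<Omega> (u s)) has_real_derivative 2 * l2ip \<Omega> u' (u t)) (at t within {0..T})"
proof -
  let ?F = "at t within {0..T}"
  let ?N = "l2norm_sq \<Omega>"
  define D where "D = 2 * l2ip \<Omega> u' (u t)"
  define r where "r s = (\<lambda>x. (1/(s-t)) *\<^sub>R (u s x - u t x) - u' x)" for s
  define w where "w s = (\<lambda>x. u' x + r s x)" for s
  have evS: "\<forall>\<^sub>F s in ?F. s \<in> {0..T} \<and> s \<noteq> t" by (auto simp: eventually_at_filter)
  have rV: "r s \<in> V" if "s \<in> {0..T}" for s
  proof -
    have "(\<lambda>x. (1/(s-t)) *\<^sub>R u s x + (-1/(s-t)) *\<^sub>R u t x) \<in> V" using fe_lin[OF fe] uV that ts by blast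
    hence "(\<lambda>x. 1 *\<^sub>R ((1/(s-t)) *\<^sub>R u s x + (-1/(s-t)) *\<^sub>R u t x) + (-1) *\<^sub>R u' x) \<in> V"
      using fe_lin[OF fe _ u'V] by blast
    moreover have "(\<lambda>x. 1 *\<^sub>R ((1/(s-t)) *\<^sub>R u s x + (-1/(s-t)) *\<^sub>R u t x) + (-1) *\<^sub>R u' x) = r s"
      by (simp add: r_def fun_eq_iff scaleR_diff_right divide_inverse)
    ultimately show ?thesis by simp
  qed
  have uL2: "L2 \<Omega> (u t)" "L2 \<Omega> u'" using fe_L2[OF fe] uV u'V ts by auto
  have rL2: "L2 \<Omega> (r s)" if "s \<in> {0..T}" for s using fe_L2[OF fe rV[OF that]] .
  have wL2: "L2 \<Omega> (w s)" if "s \<in> {0..T}" for s unfolding w_def using L2_add[OF uL2(2) rL2[OF that]] .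
  have NR: "((\<lambda>s. ?N (r s)) \<longlongrightarrow> 0) ?F"
  proof (rule conv0[OF fe])
    show "\<forall>\<^sub>F s in ?F. r s \<in> V" using evS by eventually_elim (use rV in auto)
    show "\<forall>x\<in>\<Omega>. ((\<lambda>s. r s x) \<longlongrightarrow> 0) ?F" unfolding r_def using d vd_quot by blast
  qed
  have ident: "(?N (u s) - ?N (u t)) / (s - t) = D + (2 * l2ip \<Omega> (u t) (r s) + (s - t) * ?N (w s))"
    if s: "s \<in> {0..T}" "s \<noteq> t" for s
  proof -
    have us: "u s = (\<lambda>x. u t x + (s-t) *\<^sub>R w s x)"
      using s by (simp add: w_def r_def fun_eq_iff scaleR_diff_right)
    have "?N (u s) = ?N (u t) + 2 * l2ip \<Omega> (u t) (\<lambda>x. (s-t) *\<^sub>R w s x) + ?N (\<lambda>x. (s-t) *\<^sub>R w s x)"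
      unfolding us by (rule N_expand[OF uL2(1) L2_scale[OF wL2[OF s(1)]]])
    also have "l2ip \<Omega> (u t) (\<lambda>x. (s-t) *\<^sub>R w s x) = (s-t) * (l2ip \<Omega> (u t) u' + l2ip \<Omega> (u t) (r s))"
      unfolding l2ip_scale_right w_def l2ip_add_right[OF uL2(1) uL2(2) rL2[OF s(1)]] ..
    also have "?N (\<lambda>x. (s-t) *\<^sub>R w s x) = (s-t)^2 * ?N (w s)" by (rule N_scale)
    finally have "?N (u s) - ?N (u t) = (s-t) * (D + (2 * l2ip \<Omega> (u t) (r s) + (s - t) * ?N (w s)))"
      by (simp add: D_def l2ip_comm[of \<Omega> u'] algebra_simps power2_eq_square)
    thus ?thesis using s(2) by simp
  qed
  have A: "((\<lambda>s. 2 * l2ip \<Omega> (u t) (r s)) \<longlongrightarrow> 0) ?F"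
  proof (rule Lim_null_comparison)
    show "\<forall>\<^sub>F s in ?F. norm (2 * l2ip \<Omega> (u t) (r s)) \<le> 2 * (sqrt (?N (u t)) * sqrt (?N (r s)))"
      using evS
    proof eventually_elim
      case (elim s)
      have "\<bar>l2ip \<Omega> (u t) (r s)\<bar> \<le> sqrt (?N (u t)) * sqrt (?N (r s))"
        using ip_CS[OF uL2(1) rL2[of s]] elim by auto
      thus ?case by (simp add: abs_mult)
    qed
    have "((\<lambda>s. 2 * (sqrt (?N (u t)) * sqrt (?N (r s)))) \<longlongrightarrow> 2 * (sqrt (?N (u t)) * sqrt 0)) ?F"
      by (intro tendsto_intros NR)
    thus "((\<lambda>s. 2 * (sqrt (?N (u t)) * sqrt (?N (r s)))) \<longlongrightarrow> 0) ?F" by simp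
  qed
  have B: "((\<lambda>s. (s - t) * ?N (w s)) \<longlongrightarrow> 0) ?F"
  proof (rule Lim_null_comparison)
    show "\<forall>\<^sub>F s in ?F. norm ((s - t) * ?N (w s)) \<le> \<bar>s - t\<bar> * (2 * ?N u' + 2 * ?N (r s))"
      using evS
    proof eventually_elim
      case (elim s)
      have "?N (w s) \<le> 2 * ?N u' + 2 * ?N (r s)" unfolding w_def
        using N_add_le[OF uL2(2) rL2] elim by auto
      thus ?case using N_nonneg[of \<Omega> "w s"] by (simp add: abs_mult mult_left_mono)
    qed
    have "((\<lambda>s. s - t) \<longlongrightarrow> t - t) ?F" by (intro tendsto_intros)
    hence st: "((\<lambda>s. s - t) \<longlongrightarrow> 0) ?F" by simp
    have "((\<lambda>s. \<bar>s - t\<bar> * (2 * ?N u' + 2 * ?N (r s))) \<longlongrightarrow> \<bar>0\<bar> * (2 * ?N u' + 2 * 0)) ?F"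
      by (intro tendsto_intros st NR)
    thus "((\<lambda>s. \<bar>s - t\<bar> * (2 * ?N u' + 2 * ?N (r s))) \<longlongrightarrow> 0) ?F" by simp
  qed
  have "((\<lambda>s. D + (2 * l2ip \<Omega> (u t) (r s) + (s - t) * ?N (w s))) \<longlongrightarrow> D + (0 + 0)) ?F"
    by (intro tendsto_intros A B)
  hence L: "((\<lambda>s. D + (2 * l2ip \<Omega> (u t) (r s) + (s - t) * ?N (w s))) \<longlongrightarrow> D) ?F" by simp
  have E: "\<forall>\<^sub>F s in ?F. D + (2 * l2ip \<Omega> (u t) (r s) + (s - t) * ?N (w s)) = (?N (u s) - ?N (u t)) / (s - t)"
    using evS by eventually_elim (use ident in auto)
  have "((\<lambda>s. (?N (u s) - ?N (u t)) / (s - t)) \<longlongrightarrow> D) ?F"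
    by (rule Lim_transform_eventually[OF L E])
  thus ?thesis unfolding D_def has_field_derivative_iff .
qed



lemma sint_nonneg: "(\<And>x. x\<in>A \<Longrightarrow> 0 \<le> f x) \<Longrightarrow> 0 \<le> (LINT x:A|M. (f x::real))"
  unfolding set_lebesgue_integral_def
  by (rule integral_nonneg_AE) (auto simp: indicator_def)

lemma sint_sum:
  fixes f :: "'i \<Rightarrow> 'a \<Rightarrow> real"
  assumes "\<And>i. i\<in>I \<Longrightarrow> set_integrable M A (f i)"
  shows "set_integrable M A (\<lambda>x. \<Sum>i\<in>I. f i x)"
    and "(LINT x:A|M. (\<Sum>i\<in>I. f i x)) = (\<Sum>i\<in>I. LINT x:A|M. f i x)"
  using assms unfolding set_integrable_def set_lebesgue_integral_def scaleR_sum_right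
  by (auto intro!: Bochner_Integration.integral_sum)

lemma L2_zero: "L2 \<Omega> (\<lambda>x. 0::'b::euclidean_space)"
  by (simp add: L2_def set_borel_measurable_def set_integrable_def)

lemma L2_sum:
  fixes f :: "'i \<Rightarrow> real^'n \<Rightarrow> 'b::euclidean_space"
  shows "finite I \<Longrightarrow> (\<And>i. i\<in>I \<Longrightarrow> L2 \<Omega> (f i)) \<Longrightarrow> L2 \<Omega> (\<lambda>x. \<Sum>i\<in>I. f i x)"
proof (induction I rule: finite_induct)
  case empty thus ?case by (simp add: L2_zero)
next
  case (insert a I) thus ?case by (simp add: L2_add)
qed

lemma lap_L2: "H2 \<Omega> v \<Longrightarrow> L2 \<Omega> (lap \<Omega> v)"
  unfolding lap_def H2_def H1_def by (intro L2_sum) auto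

lemma gradip_self: "gradip \<Omega> v v = (\<Sum>i\<in>UNIV. l2norm_sq \<Omega> (wd \<Omega> i v))"
  by (simp add: gradip_def l2ip_self)

lemma gradip_nonneg: "gradip \<Omega> v v \<ge> 0"
  unfolding gradip_self by (intro sum_nonneg) (simp add: N_nonneg)

lemma Cform_zero: "Cform \<Omega> b4 v v v = 0"
  by (simp add: Cform_def dot_cross_self)

lemma Bform_lower:
  assumes "b5 \<ge> 0" "b3 \<ge> 0"
  shows "Bform \<Omega> b3 b5 v v v v \<ge> b3 * l4norm_pow4 \<Omega> v"
proof -
  have e: "(\<lambda>x. (v x \<bullet> v x) * (v x \<bullet> v x)) = (\<lambda>x. norm (v x)^4)"
    by (simp add: fun_eq_iff power2_norm_eq_inner[symmetric] eval_nat_numeral mult.assoc)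
  have I1: "0 \<le> (LINT x:\<Omega>|lebesgue. (v x \<bullet> v x) * (\<Sum>i\<in>UNIV. wd \<Omega> i v x \<bullet> wd \<Omega> i v x))"
    by (rule sint_nonneg) (auto intro!: sum_nonneg mult_nonneg_nonneg)
  have I2: "0 \<le> (LINT x:\<Omega>|lebesgue. \<Sum>i\<in>UNIV. (v x \<bullet> wd \<Omega> i v x) * (v x \<bullet> wd \<Omega> i v x))"
    by (rule sint_nonneg) (auto intro!: sum_nonneg)
  show ?thesis unfolding Bform_def e l4norm_pow4_def
    using I1 I2 assms by (simp add: add_nonneg_nonneg)
qed

lemma AE_j:
  assumes op: "open \<Omega>" and aj: "admissible_field \<Omega> j"
  shows "AE x in lebesgue. x \<in> \<Omega> \<longrightarrow> norm (j x) \<le> 1"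
proof -
  have "AE x in lebesgue_on \<Omega>. ereal (norm (j x)) \<le> 1"
    using esssup_AE[where M="lebesgue_on \<Omega>" and f="\<lambda>x. ereal (norm (j x))"] aj by (simp add: admissible_field_def)
  hence "AE x in lebesgue_on \<Omega>. norm (j x) \<le> 1" by simp
  thus ?thesis using op by (subst (asm) AE_restrict_space_iff) auto
qed

lemma transport_bound:
  fixes v :: "real^'n \<Rightarrow> real^3"
  assumes op: "open \<Omega>" and aj: "admissible_field \<Omega> j" and H: "H1 \<Omega> v"
  shows "transport \<Omega> j v v \<le> (gradip \<Omega> v v + real CARD('n) * l2norm_sq \<Omega> v) / 2"
proof -
  define d where "d i = wd \<Omega> i v" for i
  have dL2: "L2 \<Omega> (d i)" for i using H by (simp add: H1_def d_def)
  have vL2: "L2 \<Omega> v" using H by (simp add: H1_def)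
  define h where "h i x = (norm (d i x)^2 + norm (v x)^2)/2" for i x
  have hi: "set_integrable lebesgue \<Omega> (h i)" for i
    using dL2[of i] vL2 unfolding h_def L2_def by (auto intro!: set_integral_add)
  have hint: "(LINT x:\<Omega>|lebesgue. h i x) = (l2norm_sq \<Omega> (d i) + l2norm_sq \<Omega> v)/2" for i
    using dL2[of i] vL2 unfolding h_def L2_def l2norm_sq_def by (simp add: set_integral_add)
  have gi: "set_integrable lebesgue \<Omega> (\<lambda>x. \<Sum>i\<in>UNIV. h i x)" using sint_sum(1)[OF hi] .
  have gint: "(LINT x:\<Omega>|lebesgue. \<Sum>i\<in>UNIV. h i x) = (gradip \<Omega> v v + real CARD('n) * l2norm_sq \<Omega> v) / 2"
    unfolding sint_sum(2)[OF hi] hint gradip_self d_def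
    by (simp add: sum_divide_distrib[symmetric] sum.distrib)
  have pt: "(\<Sum>i\<in>UNIV. j x $ i * (d i x \<bullet> v x)) \<le> (\<Sum>i\<in>UNIV. h i x)" if "norm (j x) \<le> 1" for x
  proof (rule sum_mono)
    fix i
    have "j x $ i * (d i x \<bullet> v x) \<le> \<bar>j x $ i\<bar> * \<bar>d i x \<bullet> v x\<bar>" by (simp add: abs_mult[symmetric])
    also have "\<dots> \<le> 1 * (norm (d i x) * norm (v x))"
      using that component_le_norm_cart[of "j x" i] Cauchy_Schwarz_ineq2[of "d i x" "v x"]
      by (intro mult_mono) auto
    also have "\<dots> \<le> h i x"
    proof -
      have "0 \<le> (norm (d i x) - norm (v x))^2" by simp
      thus ?thesis by (simp add: h_def power2_diff)
    qed
    finally show "j x $ i * (d i x \<bullet> v x) \<le> h i x" .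
  qed
  have "transport \<Omega> j v v \<le> (LINT x:\<Omega>|lebesgue. \<Sum>i\<in>UNIV. h i x)"
    unfolding transport_def set_lebesgue_integral_def d_def[symmetric]
  proof (rule integral_mono_AE')
    show "integrable lebesgue (\<lambda>x. indicat_real \<Omega> x *\<^sub>R (\<Sum>i\<in>UNIV. h i x))"
      using gi by (simp add: set_integrable_def)
    show "AE x in lebesgue. indicat_real \<Omega> x *\<^sub>R (\<Sum>i\<in>UNIV. j x $ i * (d i x \<bullet> v x))
        \<le> indicat_real \<Omega> x *\<^sub>R (\<Sum>i\<in>UNIV. h i x)"
      using AE_j[OF op aj] by eventually_elim (use pt in \<open>auto simp: indicator_def\<close>)
    show "AE x in lebesgue. 0 \<le> indicat_real \<Omega> x *\<^sub>R (\<Sum>i\<in>UNIV. h i x)"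
      by (rule AE_I2) (auto simp: indicator_def h_def intro!: sum_nonneg)
  qed
  thus ?thesis using gint by simp
qed



definition Kc :: "real \<Rightarrow> real \<Rightarrow> real \<Rightarrow> real \<Rightarrow> real \<Rightarrow> real" where
  "Kc b1 b2 b3 b6 n = 2*b3 + b6*n + (2*\<bar>b1\<bar>+b6)*(2*\<bar>b1\<bar>+b6+1)/(2*b2)"

lemma energy_ineq:
  fixes v u' :: "real^'n \<Rightarrow> real^3"
  assumes op: "open \<Omega>" and aj: "admissible_field \<Omega> j" and fe: "fe_space \<Omega> Th V" and vV: "v \<in> V"
    and sch: "l2ip \<Omega> u' v + Aform \<Omega> \<alpha> b1 b2 b3 b4 b5 v v v - (\<alpha> + b3) * l2ip \<Omega> v v - b6 * transport \<Omega> j v v = 0"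
    and b2: "b2 > 0" and b3: "b3 > 0" and b5: "b5 \<ge> 0" and b6: "b6 \<ge> 0"
  shows "2 * l2ip \<Omega> u' v + b2 * l2norm_sq \<Omega> (lap \<Omega> v) + 2*b3*l4norm_pow4 \<Omega> v
          \<le> Kc b1 b2 b3 b6 (real CARD('n)) * l2norm_sq \<Omega> v"
proof -
  define E where "E = l2norm_sq \<Omega> v"
  define L where "L = l2norm_sq \<Omega> (lap \<Omega> v)"
  define Q where "Q = l4norm_pow4 \<Omega> v"
  define G where "G = gradip \<Omega> v v"
  define Tr where "Tr = transport \<Omega> j v v"
  define Bf where "Bf = Bform \<Omega> b3 b5 v v v v"
  define n where "n = real CARD('n)"
  define a where "a = 2*\<bar>b1\<bar> + b6"
  define e where "e = b2 / (a+1)"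
  have a: "a \<ge> 0" using b6 by (simp add: a_def)
  have e: "e > 0" using a b2 by (simp add: e_def)
  have H2nv: "H2n \<Omega> v" using fe vV by (simp add: fe_space_def)
  hence H2v: "H2 \<Omega> v" by (simp add: H2n_def)
  hence H1v: "H1 \<Omega> v" by (simp add: H2_def)
  hence vL2: "L2 \<Omega> v" by (simp add: H1_def)
  have lapL2: "L2 \<Omega> (lap \<Omega> v)" using lap_L2[OF H2v] .
  have green: "l2ip \<Omega> (lap \<Omega> v) v + G = 0" using H2nv H1v by (simp add: H2n_def G_def)
  have Gb: "G \<le> (e * L + E / e) / 2"
    using ip_amgm[OF lapL2 vL2 e] green by (simp add: L_def E_def abs_le_iff)
  have G0: "G \<ge> 0" using gradip_nonneg by (simp add: G_def)
  have L0: "L \<ge> 0" using N_nonneg by (simp add: L_def)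
  have Bl: "Bf \<ge> b3 * Q" using Bform_lower[OF b5, of b3 \<Omega> v] b3 by (simp add: Bf_def Q_def)
  have Trb: "Tr \<le> (G + n * E) / 2" using transport_bound[OF op aj H1v] by (simp add: Tr_def G_def n_def E_def)
  have ip: "l2ip \<Omega> u' v = - b1 * G - b2 * L - Bf + b3 * E + b6 * Tr"
    using sch by (simp add: Aform_def l2ip_self Cform_zero E_def L_def G_def Bf_def Tr_def algebra_simps)
  have t1: "b6 * Tr \<le> b6 * ((G + n * E) / 2)" using Trb b6 by (rule mult_left_mono)
  have t2: "(-2*b1 + b6) * G \<le> a * G" using G0 by (intro mult_right_mono) (auto simp: a_def)
  have t3: "a * G \<le> a * ((e * L + E / e) / 2)" using Gb a by (rule mult_left_mono)
  have t4: "a * ((e * L + E / e) / 2) = (a*e/2) * L + (a*(a+1)/(2*b2)) * E"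
  proof -
    have 1: "a * ((e * L + E / e) / 2) = (a*e/2) * L + (a/2) * (E / e)" by (simp add: algebra_simps add_divide_distrib)
    have 2: "E / e = ((a+1)/b2) * E" using a b2 by (simp add: e_def)
    have 3: "(a/2) * (((a+1)/b2) * E) = (a*(a+1)/(2*b2)) * E" by simp
    show ?thesis by (subst 1, subst 2, subst 3, rule refl)
  qed
  have ae: "a*e/2 \<le> b2"
  proof -
    have "a*e/2 = b2 * (a/(a+1)) / 2" by (simp add: e_def)
    also have "\<dots> \<le> b2 * 1 / 2" using a b2 by (intro divide_right_mono mult_left_mono) auto
    finally show ?thesis using b2 by simp
  qed
  have t5: "(a*e/2) * L \<le> b2 * L" using ae L0 by (rule mult_right_mono)
  have "2 * l2ip \<Omega> u' v + b2 * L + 2*b3*Q \<le> (2*b3 + b6*n + a*(a+1)/(2*b2)) * E"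
  proof -
    have "2 * l2ip \<Omega> u' v = (-2*b1 + b6) * G - 2*b2*L - 2*Bf + 2*b3*E + (2*(b6*Tr) - b6*G)"
      unfolding ip by (simp add: algebra_simps)
    also have "\<dots> \<le> a*G - 2*b2*L - 2*b3*Q + 2*b3*E + b6*n*E"
      using t1 t2 Bl by (simp add: algebra_simps)
    finally have "2 * l2ip \<Omega> u' v \<le> a*G - 2*b2*L - 2*b3*Q + 2*b3*E + b6*n*E" .
    moreover have "(2*b3 + b6*n + a*(a+1)/(2*b2)) * E = 2*b3*E + b6*n*E + (a*(a+1)/(2*b2)) * E"
      by (simp add: distrib_right)
    ultimately show ?thesis using t3 t4 t5 by linarith
  qed
  thus ?thesis by (simp add: Kc_def a_def n_def E_def L_def Q_def)
qed



theorem mainTheorem3: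
  fixes \<alpha> \<beta>1 \<beta>2 \<beta>3 \<beta>4 \<beta>5 \<beta>6 T :: real
  assumes "CARD('n) \<in> {1, 2, 3}"
    and "\<beta>2 > 0" and "\<beta>3 > 0" and "\<beta>4 \<ge> 0" and "\<beta>5 \<ge> 0" and "\<beta>6 \<ge> 0"
    and "\<alpha> > 0" and "\<beta>1 < 0 \<longrightarrow> \<alpha> > \<beta>1\<^sup>2 / \<beta>2"
    and "T > 0"
  shows "\<exists>C::real. \<forall>(\<Omega> :: (real^'n) set) (j :: real^'n \<Rightarrow> real^'n) (\<sigma>::real) (h::real)
            (Th :: (real^'n) set set) (V :: (real^'n \<Rightarrow> real^3) set)
            (u :: real \<Rightarrow> real^'n \<Rightarrow> real^3) (u' :: real \<Rightarrow> real^'n \<Rightarrow> real^3).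
     bounded_domain \<Omega> \<and> H2_regular \<Omega> \<and> admissible_field \<Omega> j \<and>
     h > 0 \<and> triangulation \<Omega> Th \<and> meshsize Th = h \<and> shape_regular \<sigma> Th \<and>
     fe_space \<Omega> Th V \<and> semidiscrete_solution \<Omega> j \<alpha> \<beta>1 \<beta>2 \<beta>3 \<beta>4 \<beta>5 \<beta>6 T V u u'
     \<longrightarrow> (\<forall>t\<in>{0..T}.
            l2norm_sq \<Omega> (u t)
            + integral {0..t} (\<lambda>s. l2norm_sq \<Omega> (lap \<Omega> (u s)))
            + integral {0..t} (\<lambda>s. l4norm_pow4 \<Omega> (u s))
          \<le> C * l2norm_sq \<Omega> (u 0))"
proof -
  note b2 = assms(2) and b3 = assms(3) and b5 = assms(5) and b6 = assms(6) and T0 = assms(9)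
  define n where "n = real CARD('n)"
  define K where "K = Kc \<beta>1 \<beta>2 \<beta>3 \<beta>6 n"
  have K0: "K \<ge> 0" using b2 b3 b6 by (simp add: K_def Kc_def n_def)
  define Y0 where "Y0 = 1 + K*T*exp(K*T)"
  define C where "C = exp (K*T) + Y0 * (1/\<beta>2 + 1/(2*\<beta>3))"
  show ?thesis
  proof (intro exI[of _ C] allI impI ballI)
    fix \<Omega> :: "(real^'n) set" and j :: "real^'n \<Rightarrow> real^'n" and \<sigma> h :: real
      and Th :: "(real^'n) set set" and V :: "(real^'n \<Rightarrow> real^3) set"
      and u u' :: "real \<Rightarrow> real^'n \<Rightarrow> real^3" and t :: real
    assume H: "bounded_domain \<Omega> \<and> H2_regular \<Omega> \<and> admissible_field \<Omega> j \<and>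
     h > 0 \<and> triangulation \<Omega> Th \<and> meshsize Th = h \<and> shape_regular \<sigma> Th \<and>
     fe_space \<Omega> Th V \<and> semidiscrete_solution \<Omega> j \<alpha> \<beta>1 \<beta>2 \<beta>3 \<beta>4 \<beta>5 \<beta>6 T V u u'"
      and t: "t \<in> {0..T}"
    have op: "open \<Omega>" using H by (simp add: bounded_domain_def)
    have aj: "admissible_field \<Omega> j" and fe: "fe_space \<Omega> Th V"
      and sol: "semidiscrete_solution \<Omega> j \<alpha> \<beta>1 \<beta>2 \<beta>3 \<beta>4 \<beta>5 \<beta>6 T V u u'" using H by auto
    have uV: "\<forall>s\<in>{0..T}. u s \<in> V" and u'V: "\<And>s. s\<in>{0..T} \<Longrightarrow> u' s \<in> V"
      and dv: "\<And>s. s\<in>{0..T} \<Longrightarrow> \<forall>x\<in>\<Omega>. ((\<lambda>r. u r x) has_vector_derivative u' s x) (at s within {0..T})"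
      and sch: "\<And>s w. s\<in>{0..T} \<Longrightarrow> w \<in> V \<Longrightarrow> l2ip \<Omega> (u' s) w + Aform \<Omega> \<alpha> \<beta>1 \<beta>2 \<beta>3 \<beta>4 \<beta>5 (u s) (u s) w
                 - (\<alpha> + \<beta>3) * l2ip \<Omega> (u s) w - \<beta>6 * transport \<Omega> j (u s) w = 0"
      using sol unfolding semidiscrete_solution_def by auto
    define E where "E s = l2norm_sq \<Omega> (u s)" for s
    define D where "D s = 2 * l2ip \<Omega> (u' s) (u s)" for s
    define Lf where "Lf s = l2norm_sq \<Omega> (lap \<Omega> (u s))" for s
    define Qf where "Qf s = l4norm_pow4 \<Omega> (u s)" for s
    have dE: "(E has_real_derivative D s) (at s within {0..T})" if s: "s \<in> {0..T}" for s
      unfolding E_def D_def by (rule E_deriv[OF fe uV u'V[OF s] dv[OF s] s])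
    have ineq: "D s + \<beta>2 * Lf s + 2*\<beta>3*Qf s \<le> K * E s" if s: "s \<in> {0..T}" for s
    proof -
      have us: "u s \<in> V" using uV s by blast
      show ?thesis using energy_ineq[OF op aj fe us sch[OF s us] b2 b3 b5 b6]
        by (simp add: D_def Lf_def Qf_def E_def K_def n_def)
    qed
    have E0: "E s \<ge> 0" for s by (simp add: E_def N_nonneg)
    have L0: "Lf s \<ge> 0" for s by (simp add: Lf_def N_nonneg)
    have Q0: "Qf s \<ge> 0" for s unfolding Qf_def l4norm_pow4_def by (rule sint_nonneg) simp
    have DK: "D s \<le> K * E s" if "s \<in> {0..T}" for s
      using ineq[OF that] L0[of s] Q0[of s] b2 b3 by (smt (verit) mult_nonneg_nonneg)
    have cont: "continuous_on {0..T} E" using DERIV_continuous_on[of "{0..T}" E D] dE by blast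
    have t0: "0 \<le> t" "t \<le> T" using t by auto
    have Es: "E t \<le> exp (K*T) * E 0" if t: "t \<in> {0..T}" for t
    proof -
      have t0: "0 \<le> t" "t \<le> T" using t by auto
      define g where "g s = exp (- (K * s)) * E s" for s
      have "g t \<le> g 0"
      proof (rule DERIV_nonpos_imp_decreasing_open[OF t0(1)])
        fix x assume x: "0 < x" "x < t"
        hence xT: "x \<in> {0..T}" "0 < x" "x < T" using t0 by auto
        have B: "(E has_real_derivative D x) (at x)"
          using dE[OF xT(1)] at_within_Icc_at[OF xT(2,3)] by simp
        have A: "((\<lambda>s. exp (- (K * s))) has_real_derivative exp (- (K*x)) * (-K)) (at x)"
          by (auto intro!: derivative_eq_intros)
        have "(g has_real_derivative exp (- (K*x)) * (-K) * E x + D x * exp (- (K*x))) (at x)"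
          unfolding g_def by (rule DERIV_mult[OF A B])
        moreover have "exp (- (K*x)) * (-K) * E x + D x * exp (- (K*x)) = exp (- (K*x)) * (D x - K * E x)"
          by (simp add: algebra_simps)
        moreover have "exp (- (K*x)) * (D x - K * E x) \<le> 0"
          using DK[OF xT(1)] by (simp add: mult_nonneg_nonpos)
        ultimately show "\<exists>y. (g has_real_derivative y) (at x) \<and> y \<le> 0" by auto
      next
        show "continuous_on {0..t} g" unfolding g_def
          by (intro continuous_intros continuous_on_subset[OF cont]) (use t0 in auto)
      qed
      hence "exp (- (K*t)) * E t \<le> E 0" by (simp add: g_def)
      hence "exp (K*t) * (exp (- (K*t)) * E t) \<le> exp (K*t) * E 0" by simp
      hence "E t \<le> exp (K*t) * E 0" by (simp add: exp_minus field_simps)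
      also have "\<dots> \<le> exp (K*T) * E 0"
        using K0 t0 E0[of 0] by (intro mult_right_mono) (auto intro: mult_left_mono)
      finally show ?thesis .
    qed
    have Et: "E t \<le> exp (K*T) * E 0" using Es[OF t] .
    have FTC: "(D has_integral (E t - E 0)) {0..t}"
    proof (rule fundamental_theorem_of_calculus[OF t0(1)])
      fix x assume "x \<in> {0..t}"
      hence "x \<in> {0..T}" using t0 by auto
      from DERIV_subset[OF dE[OF this], of "{0..t}"] t0
      show "(E has_vector_derivative D x) (at x within {0..t})"
        by (simp add: has_real_derivative_iff_has_vector_derivative)
    qed
    have Eint: "E integrable_on {0..t}"
      by (rule integrable_continuous_interval, rule continuous_on_subset[OF cont]) (use t0 in auto)
    define R where "R s = K * E s - D s" for s
    have Rhas: "(R has_integral (K * integral {0..t} E - (E t - E 0))) {0..t}"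
      unfolding R_def by (intro has_integral_diff has_integral_mult_right FTC integrable_integral Eint)
    have Rint: "R integrable_on {0..t}" using Rhas by blast
    have "integral {0..t} E \<le> integral {0..t} (\<lambda>s. exp (K*T) * E 0)"
      by (rule integral_le[OF Eint]) (use Es t0 in auto)
    also have "\<dots> = t * (exp (K*T) * E 0)" using t0 by simp
    finally have intE: "integral {0..t} E \<le> t * (exp (K*T) * E 0)" .
    have "integral {0..t} R = K * integral {0..t} E - (E t - E 0)" using Rhas by (rule integral_unique)
    also have "\<dots> \<le> Y0 * E 0"
    proof -
      have "K * integral {0..t} E \<le> K * (t * (exp (K*T) * E 0))" using intE K0 by (rule mult_left_mono)
      also have "\<dots> \<le> K * (T * (exp (K*T) * E 0))" using K0 t0 E0[of 0]
        by (intro mult_left_mono mult_right_mono) auto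
      finally show ?thesis using E0[of t] by (simp add: Y0_def algebra_simps)
    qed
    finally have intR: "integral {0..t} R \<le> Y0 * E 0" .
    have Y0E: "Y0 * E 0 \<ge> 0" using K0 T0 E0[of 0] by (simp add: Y0_def)
    have RL: "\<beta>2 * Lf s \<le> R s" "2*\<beta>3 * Qf s \<le> R s" if "s \<in> {0..t}" for s
      using ineq[of s] that t0 L0[of s] Q0[of s] b3 b2 by (auto simp: R_def) (smt (verit) mult_nonneg_nonneg)+
    have intL: "integral {0..t} Lf \<le> Y0 * E 0 / \<beta>2"
    proof (cases "Lf integrable_on {0..t}")
      case True
      have "integral {0..t} Lf \<le> integral {0..t} (\<lambda>s. R s / \<beta>2)"
        by (rule integral_le[OF True]) (use Rint RL(1) b2 in \<open>auto simp: field_simps intro: integrable_on_divide\<close>)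
      also have "\<dots> = integral {0..t} R / \<beta>2" by simp
      also have "\<dots> \<le> Y0 * E 0 / \<beta>2" using intR b2 by (simp add: divide_right_mono)
      finally show ?thesis .
    next
      case False thus ?thesis using not_integrable_integral[OF False] Y0E b2 by simp
    qed
    have intQ: "integral {0..t} Qf \<le> Y0 * E 0 / (2*\<beta>3)"
    proof (cases "Qf integrable_on {0..t}")
      case True
      have "integral {0..t} Qf \<le> integral {0..t} (\<lambda>s. R s / (2*\<beta>3))"
        by (rule integral_le[OF True]) (use Rint RL(2) b3 in \<open>auto simp: field_simps intro: integrable_on_divide\<close>)
      also have "\<dots> = integral {0..t} R / (2*\<beta>3)" by simp
      also have "\<dots> \<le> Y0 * E 0 / (2*\<beta>3)" using intR b3 by (simp add: divide_right_mono)
      finally show ?thesis .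
    next
      case False thus ?thesis using not_integrable_integral[OF False] Y0E b3 by simp
    qed
    have "E t + integral {0..t} Lf + integral {0..t} Qf \<le> exp (K*T) * E 0 + Y0 * E 0 / \<beta>2 + Y0 * E 0 / (2*\<beta>3)"
      using Et intL intQ by linarith
    also have "\<dots> = C * E 0" by (simp add: C_def algebra_simps)
    finally show "l2norm_sq \<Omega> (u t) + integral {0..t} (\<lambda>s. l2norm_sq \<Omega> (lap \<Omega> (u s)))
            + integral {0..t} (\<lambda>s. l4norm_pow4 \<Omega> (u s)) \<le> C * l2norm_sq \<Omega> (u 0)"
      unfolding E_def Lf_def Qf_def .
  qed
qed


end
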